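(* Let $S:=T_1T_2\cdots T_{N-1}$. Let $i,k$ be integers with $k\ge0$, $i\le N-1$ and $i-k>1$. Then $$(T_{i-k}T_{i-k+1}\cdots T_i)(S\,T_{N-1}T_{N-2}\cdots T_i)=(S\,T_{N-1}T_{N-2}\cdots T_{i+1})(T_{i-k-1}T_{i-k}\cdots T_i)$$ in $\mathcal H_N(s)$ (where $T_{N-1}\cdots T_{i+1}$ is the empty product when $i=N-1$).
   Context: $N\ge2$, $s$ an indeterminate. $\mathcal H_N(s)$ is the algebra generated by $T_1,\dots,T_{N-1}$ with relations $(T_i+1)(T_i-s)=0$, $T_iT_{i+1}T_i=T_{i+1}T_iT_{i+1}$, $T_iT_j=T_jT_i$ for $|i-j|>1$. *)

theory Defs
  imports Main
begin

text \<open>Hecke algebra relations for generators T 1, ..., T (N-1) with parameter s,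
  inside an arbitrary ring 'a in which s is central (i.e. a Z[s]-algebra).
  An identity holds in H_N(s) iff it holds for all such families (universal property).\<close>

definition hecke_rels :: "nat \<Rightarrow> 'a::ring_1 \<Rightarrow> (nat \<Rightarrow> 'a) \<Rightarrow> bool" where
  "hecke_rels N s T \<longleftrightarrow>
     (\<forall>i. 1 \<le> i \<and> i \<le> N - 1 \<longrightarrow> s * T i = T i * s) \<and>
     (\<forall>i. 1 \<le> i \<and> i \<le> N - 1 \<longrightarrow> (T i + 1) * (T i - s) = 0) \<and>
     (\<forall>i. 1 \<le> i \<and> i + 1 \<le> N - 1 \<longrightarrow> T i * T (i+1) * T i = T (i+1) * T i * T (i+1)) \<and>
     (\<forall>i j. 1 \<le> i \<and> i \<le> N - 1 \<and> 1 \<le> j \<and> j \<le> N - 1 \<and> (i + 1 < j \<or> j + 1 < i)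
              \<longrightarrow> T i * T j = T j * T i)"

definition asc_prod :: "(nat \<Rightarrow> 'a::monoid_mult) \<Rightarrow> nat \<Rightarrow> nat \<Rightarrow> 'a" where
  "asc_prod T a b = prod_list (map T [a..<Suc b])"

definition desc_prod :: "(nat \<Rightarrow> 'a::monoid_mult) \<Rightarrow> nat \<Rightarrow> nat \<Rightarrow> 'a" where
  "desc_prod T b a = prod_list (map T (rev [a..<Suc b]))"

end

theory Submission
  imports Defs
begin

lemma comm_list:
  fixes T :: "nat \<Rightarrow> 'a::ring_1"
  assumes H: "hecke_rels N s T" and j: "1 \<le> j" "j \<le> N - 1"
    and xs: "\<forall>l\<in>set xs. 1 \<le> l \<and> l \<le> N - 1 \<and> (l + 1 < j \<or> j + 1 < l)"
  shows "T j * prod_list (map T xs) = prod_list (map T xs) * T j"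
  using xs
proof (induction xs)
  case Nil then show ?case by simp
next
  case (Cons l xs)
  have c: "T j * T l = T l * T j" using H Cons.prems j unfolding hecke_rels_def by auto
  have "T j * prod_list (map T (l # xs)) = T j * T l * prod_list (map T xs)"
    by (simp add: mult.assoc)
  also have "\<dots> = T l * (T j * prod_list (map T xs))" by (simp add: c mult.assoc)
  also have "\<dots> = T l * (prod_list (map T xs) * T j)" using Cons by simp
  finally show ?case by (simp add: mult.assoc)
qed

lemma comm_lists:
  fixes T :: "nat \<Rightarrow> 'a::ring_1"
  assumes H: "hecke_rels N s T"
    and xs: "\<forall>j\<in>set xs. 1 \<le> j \<and> j \<le> N - 1"
    and ys: "\<forall>l\<in>set ys. 1 \<le> l \<and> l \<le> N - 1"
    and far: "\<forall>j\<in>set xs. \<forall>l\<in>set ys. l + 1 < j \<or> j + 1 < l"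
  shows "prod_list (map T xs) * prod_list (map T ys) = prod_list (map T ys) * prod_list (map T xs)"
  using xs far
proof (induction xs)
  case Nil then show ?case by simp
next
  case (Cons j xs)
  have c: "T j * prod_list (map T ys) = prod_list (map T ys) * T j"
    using comm_list[OF H, of j ys] Cons.prems ys by auto
  have "prod_list (map T (j # xs)) * prod_list (map T ys)
      = T j * (prod_list (map T xs) * prod_list (map T ys))" by (simp add: mult.assoc)
  also have "\<dots> = T j * prod_list (map T ys) * prod_list (map T xs)" using Cons by (simp add: mult.assoc)
  also have "\<dots> = prod_list (map T ys) * prod_list (map T (j # xs))" by (simp add: c mult.assoc)
  finally show ?case .
qed

lemma shift_one:
  fixes T :: "nat \<Rightarrow> 'a::ring_1"
  assumes H: "hecke_rels N s T" and m: "1 \<le> m" "m \<le> j" and j: "j + 1 \<le> N - 1"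
  shows "T (j+1) * prod_list (map T [m..<N]) = prod_list (map T [m..<N]) * T j"
  using m
proof (induction "j - m" arbitrary: m)
  case 0
  then have mj: "m = j" by simp
  have L: "[m..<N] = j # (j+1) # [j+2..<N]" using mj j
  proof -
    have "j + 1 < N" using j by simp
    then have "[j..<N] = j # [Suc j..<N]" "[Suc j..<N] = Suc j # [Suc (Suc j)..<N]"
      by (simp_all add: upt_conv_Cons)
    then show ?thesis using mj by simp
  qed
  have br: "T j * T (j+1) * T j = T (j+1) * T j * T (j+1)" using H 0 mj j unfolding hecke_rels_def by auto
  have c: "T j * prod_list (map T [j+2..<N]) = prod_list (map T [j+2..<N]) * T j"
    by (rule comm_list[OF H]) (use j 0 mj in auto)
  have "T (j+1) * prod_list (map T [m..<N]) = (T (j+1) * T j * T (j+1)) * prod_list (map T [j+2..<N])"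
    by (simp add: L mult.assoc)
  also have "\<dots> = T j * T (j+1) * (T j * prod_list (map T [j+2..<N]))" unfolding br[symmetric] by (simp only: mult.assoc)
  also have "\<dots> = prod_list (map T [m..<N]) * T j" unfolding c L by (simp only: list.map prod_list.Cons mult.assoc)
  finally show ?case .
next
  case (Suc d)
  have L: "[m..<N] = m # [m+1..<N]" using Suc.prems j by (simp add: upt_conv_Cons)
  have IH: "T (j+1) * prod_list (map T [m+1..<N]) = prod_list (map T [m+1..<N]) * T j"
    using Suc by auto
  have c: "T (j+1) * T m = T m * T (j+1)" using H Suc j unfolding hecke_rels_def by auto
  have "T (j+1) * prod_list (map T [m..<N]) = T m * (T (j+1) * prod_list (map T [m+1..<N]))"
    unfolding L by (simp only: list.map prod_list.Cons mult.assoc[symmetric] c)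
  also have "\<dots> = prod_list (map T [m..<N]) * T j" unfolding IH L by (simp only: list.map prod_list.Cons mult.assoc)
  finally show ?case .
qed

lemma shift_list:
  fixes T :: "nat \<Rightarrow> 'a::ring_1"
  assumes H: "hecke_rels N s T" and xs: "\<forall>l\<in>set xs. 2 \<le> l \<and> l \<le> N - 1"
  shows "prod_list (map T xs) * prod_list (map T [1..<N])
       = prod_list (map T [1..<N]) * prod_list (map (\<lambda>l. T (l - 1)) xs)"
  using xs
proof (induction xs)
  case Nil then show ?case by simp
next
  case (Cons l xs)
  have "T l * prod_list (map T [1..<N]) = prod_list (map T [1..<N]) * T (l - 1)"
    using shift_one[OF H, of 1 "l - 1"] Cons.prems by auto
  then have "T l * (prod_list (map T xs) * prod_list (map T [1..<N]))
      = prod_list (map T [1..<N]) * (T (l - 1) * prod_list (map (\<lambda>l. T (l - 1)) xs))"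
    using Cons by (simp add: mult.assoc flip: mult.assoc[of "T l"])
  then show ?case by (simp add: mult.assoc)
qed

theorem lemma2p3:
  fixes N i k :: nat and s :: "'a::ring_1" and T :: "nat \<Rightarrow> 'a"
  assumes "N \<ge> 2" and "hecke_rels N s T"
    and "i \<le> N - 1" and "k + 1 < i"
  shows "asc_prod T (i - k) i * (asc_prod T 1 (N - 1) * desc_prod T (N - 1) i)
       = (asc_prod T 1 (N - 1) * desc_prod T (N - 1) (i + 1)) * asc_prod T (i - k - 1) i"
proof -
  let ?P = "\<lambda>xs. prod_list (map T xs)"
  have SN: "Suc (N - 1) = N" using assms by simp
  have S: "asc_prod T 1 (N - 1) = ?P [1..<N]" unfolding asc_prod_def SN ..
  have A: "asc_prod T (i - k) i = ?P [i-k..<Suc i]" unfolding asc_prod_def ..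
  have sh: "map (\<lambda>l. T (l - 1)) [i-k..<Suc i] = map T [i-k-1..<i]"
  proof -
    have e: "[i-k..<Suc i] = map Suc [i-k-1..<i]" using assms
      by (simp add: map_Suc_upt Suc_diff_Suc)
    show ?thesis unfolding e by (simp add: comp_def)
  qed
  have step1: "asc_prod T (i - k) i * asc_prod T 1 (N - 1) = asc_prod T 1 (N - 1) * ?P [i-k-1..<i]"
  proof -
    have "?P [i-k..<Suc i] * ?P [1..<N] = ?P [1..<N] * prod_list (map (\<lambda>l. T (l - 1)) [i-k..<Suc i])"
      by (rule shift_list[OF assms(2)]) (use assms in auto)
    then show ?thesis by (simp only: S A sh)
  qed
  have D: "desc_prod T (N - 1) i = desc_prod T (N - 1) (i + 1) * T i"
    unfolding desc_prod_def SN using assms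
    by (simp add: upt_conv_Cons)
  have B: "asc_prod T (i - k - 1) i = ?P [i-k-1..<i] * T i"
    unfolding asc_prod_def by simp
  have comm: "?P [i-k-1..<i] * desc_prod T (N - 1) (i + 1) = desc_prod T (N - 1) (i + 1) * ?P [i-k-1..<i]"
    unfolding desc_prod_def SN
    by (rule comm_lists[OF assms(2)]) (use assms in auto)
  have "asc_prod T (i - k) i * (asc_prod T 1 (N - 1) * desc_prod T (N - 1) i)
      = asc_prod T 1 (N - 1) * (?P [i-k-1..<i] * desc_prod T (N - 1) (i + 1)) * T i"
    by (simp only: D mult.assoc[symmetric] step1)
  also have "\<dots> = (asc_prod T 1 (N - 1) * desc_prod T (N - 1) (i + 1)) * asc_prod T (i - k - 1) i"
    by (simp only: comm B mult.assoc)
  finally show ?thesis .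
qed

end
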